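(* For every set $S$ of $\omega$-sharing groups and every idempotent substitution $\theta$, and for every order in which the bindings of $\theta$ are processed in the definition of $\mathrm{mgu}_\omega$, we have $\mathrm{mgu}_\omega(S,\theta)=\mathrm{mgu_p}(S,\theta)$. In other words, sequential (one binding at a time) abstract unification coincides with parallel abstract unification.
   Context: Fix a first-order signature and a denumerable set of variables $\mathcal V$. For a term $t$ and variable $v$, $\mathit{occ}(v,t)$ is the number of occurrences of $v$ in $t$. An $\omega$-sharing group is a multiset of variables with finite support, i.e. a function $B:\mathcal V\to\mathbb N$ that is nonzero on only finitely many variables; $\{\!\!\{\}\!\!\}$ is the empty multiset, and the sum of multisets is $(A\uplus B)(v)=A(v)+B(v)$. The multiplicity of an $\omega$-sharing group $B$ in a term $t$ is $\chi(B,t)=\sum_{v} B(v)\cdot\mathit{occ}(v,t)$. A multigraph $G=\langle N_G,E_G,\mathrm{src}_G,\mathrm{tgt}_G\rangle$ consists of a nonempty set of nodes $N_G$, a set of edges $E_G$, and functions $\mathrm{src}_G,\mathrm{tgt}_G:E_G\to N_G$ (multiple distinct edges, including self-loops, may join the same nodes). The out-degree (in-degree) of $n$ is the number of edges $e$ with $\mathrm{src}_G(e)=n$ (resp. $\mathrm{tgt}_G(e)=n$). A path between $n_1$ and $n_k$ is a nonempty sequence of nodes $n_1\dots n_k$ such that consecutive nodes are joined by an edge in either direction; $G$ is connected if every pair of nodes is joined by a path. A (parallel) sharing graph for a set $S$ of $\omega$-sharing groups and an idempotent substitution $\theta=\{x_1/t_1,\dots,x_p/t_p\}$ (with $p\ge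 0$) is a family $\mathcal G=\{G^i\}_{i\in[1,p]}$ of multigraphs over a common node set $N_{\mathcal G}$, with a labeling $l_{\mathcal G}:N_{\mathcal G}\to S$, such that: (i) for every node $n$ and every $i$, the out-degree of $n$ in $G^i$ equals $\chi(l_{\mathcal G}(n),x_i)$ and the in-degree of $n$ in $G^i$ equals $\chi(l_{\mathcal G}(n),t_i)$; (ii) the edge sets $E_{G^i}$ are pairwise disjoint; (iii) the flattening of $\mathcal G$, i.e. the multigraph with nodes $N_{\mathcal G}$, edges $\bigcup_i E_{G^i}$ and source/target inherited from the layers, is connected. The resultant $\omega$-sharing group is $\mathit{res}(\mathcal G)=\biguplus_{n\in N_{\mathcal G}} l_{\mathcal G}(n)$. The parallel abstract unification is $\mathrm{mgu_p}(S,\theta)=\{\mathit{res}(\mathcal G)\mid \mathcal G \text{ a sharing graph for } S \text{ and } \theta\}$. The sequential abstract unification $\mathrm{mgu}_\omega$ is defined recursively by $\mathrm{mgu}_\omega(S,\epsilon)=S$ (with $\epsilon$ the empty substitution) and $\mathrm{mgu}_\omega(S,\{x/t\}\cup\theta)=\mathrm{mgu}_\omega(\mathrm{mgu_p}(S,\{x/t\}),\theta)$, where $\{x/t\}\cup\theta$ is idempotent and $x\notin\mathrm{dom}(\theta)$. *)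

theory Defs
  imports Main "HOL-Library.Multiset" "HOL-Library.Countable"
begin

datatype ('f, 'v) fterm = Var 'v | Fun 'f "('f, 'v) fterm list"

fun occ :: "'v \<Rightarrow> ('f, 'v) fterm \<Rightarrow> nat" where
  "occ v (Var w) = (if v = w then 1 else 0)"
| "occ v (Fun f ts) = sum_list (map (occ v) ts)"

fun subst_apply :: "('v \<Rightarrow> ('f, 'v) fterm) \<Rightarrow> ('f, 'v) fterm \<Rightarrow> ('f, 'v) fterm" where
  "subst_apply \<sigma> (Var v) = \<sigma> v"
| "subst_apply \<sigma> (Fun f ts) = Fun f (map (subst_apply \<sigma>) ts)"

definition subst_dom :: "('v \<Rightarrow> ('f, 'v) fterm) \<Rightarrow> 'v set" where
  "subst_dom \<sigma> = {x. \<sigma> x \<noteq> Var x}"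

definition idempotent_subst :: "('v \<Rightarrow> ('f, 'v) fterm) \<Rightarrow> bool" where
  "idempotent_subst \<sigma> \<longleftrightarrow> finite (subst_dom \<sigma>) \<and>
     (\<forall>t. subst_apply \<sigma> (subst_apply \<sigma> t) = subst_apply \<sigma> t)"

definition single_subst :: "'v \<Rightarrow> ('f, 'v) fterm \<Rightarrow> ('v \<Rightarrow> ('f, 'v) fterm)" where
  "single_subst x t = (\<lambda>v. if v = x then t else Var v)"

text \<open>omega-sharing groups are finite multisets of variables.
  Multiplicity chi(B,t) = sum_v B(v) * occ(v,t).\<close>
definition chi :: "'v multiset \<Rightarrow> ('f, 'v) fterm \<Rightarrow> nat" where
  "chi B t = (\<Sum>v\<in>set_mset B. count B v * occ v t)"

text \<open>A (parallel) sharing graph for S and \<sigma>: layers indexed by the variables x in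
  dom \<sigma> (binding x/\<sigma> x).\<close>
definition sharing_graph ::
  "'v multiset set \<Rightarrow> ('v \<Rightarrow> ('f, 'v) fterm) \<Rightarrow> nat set \<Rightarrow> ('v \<Rightarrow> nat set) \<Rightarrow>
   ('v \<Rightarrow> nat \<Rightarrow> nat) \<Rightarrow> ('v \<Rightarrow> nat \<Rightarrow> nat) \<Rightarrow> (nat \<Rightarrow> 'v multiset) \<Rightarrow> bool" where
  "sharing_graph S \<sigma> N E src tgt l \<longleftrightarrow>
     finite N \<and> N \<noteq> {} \<and>
     (\<forall>n\<in>N. l n \<in> S) \<and>
     (\<forall>x\<in>subst_dom \<sigma>. finite (E x) \<and> (\<forall>e\<in>E x. src x e \<in> N \<and> tgt x e \<in> N)) \<and>
     (\<forall>x\<in>subst_dom \<sigma>. \<forall>n\<in>N.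
         card {e\<in>E x. src x e = n} = chi (l n) (Var x :: ('f, 'v) fterm) \<and>
         card {e\<in>E x. tgt x e = n} = chi (l n) (\<sigma> x)) \<and>
     (\<forall>x\<in>subst_dom \<sigma>. \<forall>y\<in>subst_dom \<sigma>. x \<noteq> y \<longrightarrow> E x \<inter> E y = {}) \<and>
     (\<forall>n\<in>N. \<forall>m\<in>N. (n, m) \<in>
        ({(src x e, tgt x e) | x e. x \<in> subst_dom \<sigma> \<and> e \<in> E x} \<union>
         {(tgt x e, src x e) | x e. x \<in> subst_dom \<sigma> \<and> e \<in> E x})\<^sup>*)"

definition mgu_p :: "'v multiset set \<Rightarrow> ('v \<Rightarrow> ('f, 'v) fterm) \<Rightarrow> 'v multiset set" where
  "mgu_p S \<sigma> = {(\<Sum>n\<in>N. l n) | N E src tgt l. sharing_graph S \<sigma> N E src tgt l}"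

fun mgu_omega :: "'v multiset set \<Rightarrow> ('v \<times> ('f, 'v) fterm) list \<Rightarrow> 'v multiset set" where
  "mgu_omega S [] = S"
| "mgu_omega S ((x, t) # bs) = mgu_omega (mgu_p S (single_subst x t)) bs"

end

theory Submission
  imports Defs "HOL-Library.Nat_Bijection"
begin


lemma chi_superset: "finite F \<Longrightarrow> set_mset B \<subseteq> F \<Longrightarrow> chi B t = (\<Sum>v\<in>F. count B v * occ v t)"
  unfolding chi_def by (rule sum.mono_neutral_left) (auto simp: not_in_iff)

lemma chi_add: "chi (A + B) t = chi A t + chi B t"
proof -
  let ?F = "set_mset A \<union> set_mset B"
  have "chi (A+B) t = (\<Sum>v\<in>?F. count (A+B) v * occ v t)" by (rule chi_superset) auto
  also have "\<dots> = (\<Sum>v\<in>?F. count A v * occ v t) + (\<Sum>v\<in>?F. count B v * occ v t)"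
    by (simp add: sum.distrib algebra_simps)
  also have "\<dots> = chi A t + chi B t" by (simp add: chi_superset[symmetric])
  finally show ?thesis .
qed

lemma chi_zero: "chi {#} t = 0" by (simp add: chi_def)

lemma chi_sum: "finite N \<Longrightarrow> chi (\<Sum>n\<in>N. l n) t = (\<Sum>n\<in>N. chi (l n) t)"
  by (induction N rule: finite_induct) (auto simp: chi_add chi_zero)

lemma dom_single: "t \<noteq> Var x \<Longrightarrow> subst_dom (single_subst x t) = {x}"
  by (auto simp: subst_dom_def single_subst_def)

lemma dom_upd: "subst_dom (\<sigma>(x := Var x)) = subst_dom \<sigma> - {x}"
  by (auto simp: subst_dom_def)



definition grel :: "('v \<Rightarrow> ('f, 'v) fterm) \<Rightarrow> ('v \<Rightarrow> nat set) \<Rightarrow> ('v \<Rightarrow> nat \<Rightarrow> nat) \<Rightarrow> ('v \<Rightarrow> nat \<Rightarrow> nat) \<Rightarrow> (nat \<times> nat) set" where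
  "grel \<sigma> E src tgt = {(src x e, tgt x e) | x e. x \<in> subst_dom \<sigma> \<and> e \<in> E x} \<union>
         {(tgt x e, src x e) | x e. x \<in> subst_dom \<sigma> \<and> e \<in> E x}"

lemma sg_alt:
  fixes \<sigma> :: "'v \<Rightarrow> ('f, 'v) fterm"
  shows "sharing_graph S \<sigma> N E src tgt l \<longleftrightarrow>
     finite N \<and> N \<noteq> {} \<and>
     (\<forall>n\<in>N. l n \<in> S) \<and>
     (\<forall>x\<in>subst_dom \<sigma>. finite (E x) \<and> (\<forall>e\<in>E x. src x e \<in> N \<and> tgt x e \<in> N)) \<and>
     (\<forall>x\<in>subst_dom \<sigma>. \<forall>n\<in>N.
         card {e\<in>E x. src x e = n} = chi (l n) (Var x :: ('f, 'v) fterm) \<and>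
         card {e\<in>E x. tgt x e = n} = chi (l n) (\<sigma> x)) \<and>
     (\<forall>x\<in>subst_dom \<sigma>. \<forall>y\<in>subst_dom \<sigma>. x \<noteq> y \<longrightarrow> E x \<inter> E y = {}) \<and>
     (\<forall>n\<in>N. \<forall>m\<in>N. (n, m) \<in> (grel \<sigma> E src tgt)\<^sup>*)"
  unfolding sharing_graph_def grel_def by blast

lemma mgu_pI: "sharing_graph S \<sigma> N E src tgt l \<Longrightarrow> sum l N \<in> mgu_p S \<sigma>"
  unfolding mgu_p_def by blast

lemma rtrancl_map_gen: "(a,b) \<in> r\<^sup>* \<Longrightarrow> (\<And>x y. (x,y) \<in> r \<Longrightarrow> (f x, f y) \<in> s\<^sup>*) \<Longrightarrow> (f a, f b) \<in> s\<^sup>*"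
  by (induction rule: rtrancl_induct) (auto intro: rtrancl_trans)

lemma contract:
  fixes \<sigma> :: "'v \<Rightarrow> ('f, 'v) fterm"
  assumes G: "sharing_graph S \<sigma> N E src tgt l" and xd: "x \<in> subst_dom \<sigma>"
  shows "sum l N \<in> mgu_p (mgu_p S (single_subst x (\<sigma> x))) (\<sigma>(x := Var x))"
proof -
  let ?\<sigma>x = "single_subst x (\<sigma> x)"
  let ?\<sigma>' = "\<sigma>(x := Var x)"
  have domx: "subst_dom ?\<sigma>x = {x}" using xd by (intro dom_single) (auto simp: subst_dom_def)
  have dom': "subst_dom ?\<sigma>' = subst_dom \<sigma> - {x}" by (rule dom_upd)
  have \<sigma>xx: "?\<sigma>x x = \<sigma> x" by (simp add: single_subst_def)
  note G' = G[unfolded sg_alt]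
  have fN: "finite N" and neN: "N \<noteq> {}" and lS: "\<forall>n\<in>N. l n \<in> S"
    and fE: "\<And>y. y \<in> subst_dom \<sigma> \<Longrightarrow> finite (E y)"
    and eN: "\<And>y e. y \<in> subst_dom \<sigma> \<Longrightarrow> e \<in> E y \<Longrightarrow> src y e \<in> N \<and> tgt y e \<in> N"
    and degs: "\<And>y n. y \<in> subst_dom \<sigma> \<Longrightarrow> n \<in> N \<Longrightarrow> card {e\<in>E y. src y e = n} = chi (l n) (Var y :: ('f, 'v) fterm)"
    and degt: "\<And>y n. y \<in> subst_dom \<sigma> \<Longrightarrow> n \<in> N \<Longrightarrow> card {e\<in>E y. tgt y e = n} = chi (l n) (\<sigma> y)"
    and disj: "\<And>y z. y \<in> subst_dom \<sigma> \<Longrightarrow> z \<in> subst_dom \<sigma> \<Longrightarrow> y \<noteq> z \<Longrightarrow> E y \<inter> E z = {}"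
    and conn: "\<And>n m. n \<in> N \<Longrightarrow> m \<in> N \<Longrightarrow> (n, m) \<in> (grel \<sigma> E src tgt)\<^sup>*"
    using G' by blast+
  define Rx where "Rx = {(src x e, tgt x e) | e. e \<in> E x} \<union> {(tgt x e, src x e) | e. e \<in> E x}"
  have RxN: "(a,b) \<in> Rx \<Longrightarrow> a \<in> N \<and> b \<in> N" for a b using eN[OF xd] unfolding Rx_def by auto
  have symRx: "sym (Rx\<^sup>*)" by (rule sym_rtrancl) (auto simp: Rx_def sym_def)
  have reachN: "(a,b) \<in> Rx\<^sup>* \<Longrightarrow> a \<in> N \<Longrightarrow> b \<in> N" for a b
    by (induction rule: rtrancl_induct) (auto dest: RxN)
  define rep where "rep n = Min {m\<in>N. (n,m) \<in> Rx\<^sup>*}" for n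
  have rep1: "n \<in> N \<Longrightarrow> rep n \<in> N \<and> (n, rep n) \<in> Rx\<^sup>*" for n
  proof -
    assume n: "n \<in> N"
    have "rep n \<in> {m\<in>N. (n,m) \<in> Rx\<^sup>*}" unfolding rep_def
      by (rule Min_in) (use fN n in auto)
    then show ?thesis by auto
  qed
  have cls_eq: "(n,m) \<in> Rx\<^sup>* \<Longrightarrow> {k\<in>N. (n,k) \<in> Rx\<^sup>*} = {k\<in>N. (m,k) \<in> Rx\<^sup>*}" for n m
    using symRx by (auto intro: rtrancl_trans dest: symD)
  have rep_iff: "n \<in> N \<Longrightarrow> m \<in> N \<Longrightarrow> rep n = rep m \<longleftrightarrow> (n,m) \<in> Rx\<^sup>*" for n m
  proof
    assume n: "n \<in> N" and m: "m \<in> N" and e: "rep n = rep m"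
    have "(n, rep n) \<in> Rx\<^sup>*" "(m, rep m) \<in> Rx\<^sup>*" using rep1 n m by auto
    then show "(n,m) \<in> Rx\<^sup>*" using e symRx by (metis rtrancl_trans symD)
  next
    assume "(n,m) \<in> Rx\<^sup>*" then show "rep n = rep m" unfolding rep_def using cls_eq by simp
  qed
  have rep_rep: "n \<in> N \<Longrightarrow> rep (rep n) = rep n" for n
    using rep1 rep_iff by (metis symD symRx)
  have rep_edge: "e \<in> E x \<Longrightarrow> rep (src x e) = rep (tgt x e)" for e
    using rep_iff eN[OF xd] unfolding Rx_def by blast
  define C where "C r = {m\<in>N. rep m = rep r}" for r
  have stage1: "sum l (C r) \<in> mgu_p S ?\<sigma>x" if r: "r \<in> N" for r
  proof -
    define E1 where "E1 = (\<lambda>y::'v. {e\<in>E x. rep (src x e) = rep r})"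
    have "sharing_graph S ?\<sigma>x (C r) E1 src tgt l"
      unfolding sg_alt domx
    proof (intro conjI ballI)
      show "finite (C r)" using fN by (simp add: C_def)
      show "C r \<noteq> {}" using r by (auto simp: C_def)
      show "l n \<in> S" if "n \<in> C r" for n using that lS by (auto simp: C_def)
      fix y assume "y \<in> {x}" then have y: "y = x" by simp
      show "finite (E1 y)" using fE[OF xd] by (simp add: E1_def)
      show "src y e \<in> C r" if "e \<in> E1 y" for e
        using that eN[OF xd] rep_edge y by (auto simp: E1_def C_def)
      show "tgt y e \<in> C r" if "e \<in> E1 y" for e
        using that eN[OF xd] rep_edge y by (auto simp: E1_def C_def)
      fix n assume n: "n \<in> C r"
      have "{e\<in>E1 y. src y e = n} = {e\<in>E x. src x e = n}" using n y by (auto simp: E1_def C_def)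
      then show "card {e\<in>E1 y. src y e = n} = chi (l n) (Var y :: ('f, 'v) fterm)"
        using degs[OF xd] n y by (simp add: C_def)
      have "{e\<in>E1 y. tgt y e = n} = {e\<in>E x. tgt x e = n}" using n y rep_edge by (auto simp: E1_def C_def)
      then show "card {e\<in>E1 y. tgt y e = n} = chi (l n) (?\<sigma>x y)"
        using degt[OF xd] n y \<sigma>xx by (simp add: C_def)
    next
      fix y z assume "y \<in> {x}" "z \<in> {x}" then show "y \<noteq> z \<longrightarrow> E1 y \<inter> E1 z = {}" by simp
    next
      fix n m assume n: "n \<in> C r" and m: "m \<in> C r"
      have nm: "(n,m) \<in> Rx\<^sup>*" using n m rep_iff by (metis (mono_tags, lifting) C_def mem_Collect_eq)
      have "(n,m) \<in> Rx\<^sup>* \<Longrightarrow> (n,m) \<in> (grel ?\<sigma>x E1 src tgt)\<^sup>*"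
      proof (induction rule: rtrancl_induct)
        case base then show ?case by simp
      next
        case (step a b)
        have aN: "a \<in> N" using reachN step.hyps(1) n by (auto simp: C_def)
        have ra: "rep a = rep r" using rep_iff[OF _ aN, of n] step.hyps(1) n by (auto simp: C_def)
        from step.hyps(2) obtain e where e: "e \<in> E x" and ab: "(a,b) = (src x e, tgt x e) \<or> (a,b) = (tgt x e, src x e)"
          unfolding Rx_def by blast
        have "e \<in> E1 x" using ab ra rep_edge[OF e] e by (auto simp: E1_def)
        then have "(a,b) \<in> grel ?\<sigma>x E1 src tgt" using ab domx unfolding grel_def by blast
        then show ?case using step.IH by (rule rtrancl_into_rtrancl[rotated])
      qed
      then show "(n,m) \<in> (grel ?\<sigma>x E1 src tgt)\<^sup>*" using nm by blast
    qed
    then show ?thesis unfolding mgu_p_def by blast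
  qed
  define N2 where "N2 = rep ` N"
  define src2 where "src2 y e = rep (src y e)" for y e
  define tgt2 where "tgt2 y e = rep (tgt y e)" for y e
  define l2 where "l2 r = sum l (C r)" for r
  have C_alt: "r \<in> N2 \<Longrightarrow> C r = {m\<in>N. rep m = r}" for r
    using rep_rep by (auto simp: C_def N2_def)
  have N2N: "N2 \<subseteq> N" using rep1 by (auto simp: N2_def)
  have sg2: "sharing_graph (mgu_p S ?\<sigma>x) ?\<sigma>' N2 E src2 tgt2 l2"
    unfolding sg_alt dom'
  proof (intro conjI ballI)
    show "finite N2" using fN by (simp add: N2_def)
    show "N2 \<noteq> {}" using neN by (simp add: N2_def)
    show "l2 r \<in> mgu_p S ?\<sigma>x" if "r \<in> N2" for r using stage1 that N2N by (auto simp: l2_def)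
    fix y assume y: "y \<in> subst_dom \<sigma> - {x}"
    show "finite (E y)" using fE y by simp
    show "src2 y e \<in> N2" if "e \<in> E y" for e
      using eN y that by (auto simp: src2_def tgt2_def N2_def)
    show "tgt2 y e \<in> N2" if "e \<in> E y" for e
      using eN y that by (auto simp: src2_def tgt2_def N2_def)
    fix r assume r: "r \<in> N2"
    have cs: "{e\<in>E y. src2 y e = r} = (\<Union>m\<in>C r. {e\<in>E y. src y e = m})"
      using C_alt[OF r] eN y by (auto simp: src2_def)
    have "card {e\<in>E y. src2 y e = r} = (\<Sum>m\<in>C r. card {e\<in>E y. src y e = m})"
      unfolding cs by (rule card_UN_disjoint) (use fN fE y in \<open>auto simp: C_def\<close>)
    also have "\<dots> = (\<Sum>m\<in>C r. chi (l m) (Var y :: ('f, 'v) fterm))"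
      by (rule sum.cong) (use degs y in \<open>auto simp: C_def\<close>)
    also have "\<dots> = chi (l2 r) (Var y :: ('f, 'v) fterm)"
      unfolding l2_def by (rule chi_sum[symmetric]) (use fN in \<open>simp add: C_def\<close>)
    finally show "card {e\<in>E y. src2 y e = r} = chi (l2 r) (Var y :: ('f, 'v) fterm)" .
    have ct: "{e\<in>E y. tgt2 y e = r} = (\<Union>m\<in>C r. {e\<in>E y. tgt y e = m})"
      using C_alt[OF r] eN y by (auto simp: tgt2_def)
    have "card {e\<in>E y. tgt2 y e = r} = (\<Sum>m\<in>C r. card {e\<in>E y. tgt y e = m})"
      unfolding ct by (rule card_UN_disjoint) (use fN fE y in \<open>auto simp: C_def\<close>)
    also have "\<dots> = (\<Sum>m\<in>C r. chi (l m) (\<sigma> y))"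
      by (rule sum.cong) (use degt y in \<open>auto simp: C_def\<close>)
    also have "\<dots> = chi (l2 r) (\<sigma> y)"
      unfolding l2_def by (rule chi_sum[symmetric]) (use fN in \<open>simp add: C_def\<close>)
    finally show "card {e\<in>E y. tgt2 y e = r} = chi (l2 r) (?\<sigma>' y)" using y by simp
  next
    fix y z assume "y \<in> subst_dom \<sigma> - {x}" "z \<in> subst_dom \<sigma> - {x}"
    then show "y \<noteq> z \<longrightarrow> E y \<inter> E z = {}" using disj by blast
  next
    fix n m assume n: "n \<in> N2" and m: "m \<in> N2"
    have nN: "n \<in> N" and mN: "m \<in> N" using n m N2N by auto
    have "(rep n, rep m) \<in> (grel ?\<sigma>' E src2 tgt2)\<^sup>*"
    proof (rule rtrancl_map_gen[OF conn[OF nN mN]])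
      fix a b assume "(a,b) \<in> grel \<sigma> E src tgt"
      then obtain y e where y: "y \<in> subst_dom \<sigma>" and e: "e \<in> E y"
        and ab: "(a,b) = (src y e, tgt y e) \<or> (a,b) = (tgt y e, src y e)"
        unfolding grel_def by blast
      show "(rep a, rep b) \<in> (grel ?\<sigma>' E src2 tgt2)\<^sup>*"
      proof (cases "y = x")
        case True then show ?thesis using rep_edge e ab by auto
      next
        case False
        then have "(rep a, rep b) \<in> grel ?\<sigma>' E src2 tgt2"
          using ab y e unfolding grel_def dom' src2_def tgt2_def by blast
        then show ?thesis by blast
      qed
    qed
    then show "(n,m) \<in> (grel ?\<sigma>' E src2 tgt2)\<^sup>*" using n m rep_rep by (auto simp: N2_def)
  qed
  moreover have "sum l2 N2 = sum l N"
  proof -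
    have "sum l2 N2 = (\<Sum>r\<in>N2. sum l {m. m \<in> N \<and> rep m = r})"
      by (rule sum.cong) (auto simp: l2_def C_alt)
    also have "\<dots> = sum l N" by (rule sum.group) (use fN in \<open>auto simp: N2_def\<close>)
    finally show ?thesis .
  qed
  ultimately show ?thesis using mgu_pI[OF sg2] by simp
qed



lemma bij_count: "bij_betw h A B \<Longrightarrow> card {a\<in>A. P (h a)} = card {b\<in>B. P b}"
proof -
  assume b: "bij_betw h A B"
  have "h ` {a\<in>A. P (h a)} = {b\<in>B. P b}" using b by (auto simp: bij_betw_def)
  moreover have "inj_on h {a\<in>A. P (h a)}" using b by (auto simp: bij_betw_def intro: inj_on_subset)
  ultimately show ?thesis by (metis card_image)
qed

lemma sigma_fst_card: "n \<in> M \<Longrightarrow> card {p \<in> Sigma M (\<lambda>n. {..<c n}). fst p = n} = (c n :: nat)"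
proof -
  assume "n \<in> M"
  then have "{p \<in> Sigma M (\<lambda>n. {..<c n}). fst p = n} = {n} \<times> {..<c n}" by auto
  then show ?thesis by simp
qed

lemma explode:
  fixes \<sigma> :: "'v \<Rightarrow> ('f, 'v) fterm"
  assumes G2: "sharing_graph (mgu_p S (single_subst x (\<sigma> x))) (\<sigma>(x := Var x)) N2 E2 src2 tgt2 l2"
    and xd: "x \<in> subst_dom \<sigma>"
  shows "sum l2 N2 \<in> mgu_p S \<sigma>"
proof -
  let ?\<sigma>x = "single_subst x (\<sigma> x)"
  let ?\<sigma>' = "\<sigma>(x := Var x)"
  have domx: "subst_dom ?\<sigma>x = {x}" using xd by (intro dom_single) (auto simp: subst_dom_def)
  have dom': "subst_dom ?\<sigma>' = subst_dom \<sigma> - {x}" by (rule dom_upd)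
  have \<sigma>xx: "?\<sigma>x x = \<sigma> x" by (simp add: single_subst_def)
  note G' = G2[unfolded sg_alt dom']
  have fN: "finite N2" and neN: "N2 \<noteq> {}" and lS: "\<forall>n\<in>N2. l2 n \<in> mgu_p S ?\<sigma>x"
    and fE: "\<And>y. y \<in> subst_dom \<sigma> - {x} \<Longrightarrow> finite (E2 y)"
    and eN: "\<And>y e. y \<in> subst_dom \<sigma> - {x} \<Longrightarrow> e \<in> E2 y \<Longrightarrow> src2 y e \<in> N2 \<and> tgt2 y e \<in> N2"
    and degs: "\<And>y n. y \<in> subst_dom \<sigma> - {x} \<Longrightarrow> n \<in> N2 \<Longrightarrow> card {e\<in>E2 y. src2 y e = n} = chi (l2 n) (Var y :: ('f, 'v) fterm)"
    and degt0: "\<And>y n. y \<in> subst_dom \<sigma> - {x} \<Longrightarrow> n \<in> N2 \<Longrightarrow> card {e\<in>E2 y. tgt2 y e = n} = chi (l2 n) (?\<sigma>' y)"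
    and disj: "\<And>y z. y \<in> subst_dom \<sigma> - {x} \<Longrightarrow> z \<in> subst_dom \<sigma> - {x} \<Longrightarrow> y \<noteq> z \<Longrightarrow> E2 y \<inter> E2 z = {}"
    and conn: "\<And>n m. n \<in> N2 \<Longrightarrow> m \<in> N2 \<Longrightarrow> (n, m) \<in> (grel ?\<sigma>' E2 src2 tgt2)\<^sup>*"
    using G' by blast+
  have degt: "\<And>y n. y \<in> subst_dom \<sigma> - {x} \<Longrightarrow> n \<in> N2 \<Longrightarrow> card {e\<in>E2 y. tgt2 y e = n} = chi (l2 n) (\<sigma> y)"
    using degt0 by auto
  have "\<forall>r\<in>N2. \<exists>Nr Er sr tr lr. l2 r = sum lr Nr \<and> sharing_graph S ?\<sigma>x Nr Er sr tr lr"
    using lS unfolding mgu_p_def by blast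
  then obtain NN EE SR TR LL where W: "\<And>r. r\<in>N2 \<Longrightarrow> l2 r = sum (LL r) (NN r) \<and> sharing_graph S ?\<sigma>x (NN r) (EE r) (SR r) (TR r) (LL r)"
    unfolding bchoice_iff by blast
  
  let ?D' = "subst_dom \<sigma> - {x}"
  have Wsg: "sharing_graph S ?\<sigma>x (NN r) (EE r) (SR r) (TR r) (LL r)" and Wl: "l2 r = sum (LL r) (NN r)"
    if "r \<in> N2" for r using W[OF that] by auto
  have fNN: "finite (NN r)" and neNN: "NN r \<noteq> {}" and LLS: "\<forall>n\<in>NN r. LL r n \<in> S"
    and fEE: "finite (EE r x)"
    and eNN: "\<forall>e\<in>EE r x. SR r x e \<in> NN r \<and> TR r x e \<in> NN r"
    and degsW: "\<forall>n\<in>NN r. card {e\<in>EE r x. SR r x e = n} = chi (LL r n) (Var x :: ('f, 'v) fterm)"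
    and degtW0: "\<forall>n\<in>NN r. card {e\<in>EE r x. TR r x e = n} = chi (LL r n) (?\<sigma>x x)"
    and connW: "\<forall>n\<in>NN r. \<forall>m\<in>NN r. (n, m) \<in> (grel ?\<sigma>x (EE r) (SR r) (TR r))\<^sup>*"
    if "r \<in> N2" for r using Wsg[OF that] unfolding sg_alt domx by auto
  have degtW: "\<forall>n\<in>NN r. card {e\<in>EE r x. TR r x e = n} = chi (LL r n) (\<sigma> x)" if "r \<in> N2" for r
    using degtW0[OF that] \<sigma>xx by simp
  \<comment> \<open>bijections distributing the edges of the other layers\<close>
  have "\<forall>y\<in>?D'. \<forall>r\<in>N2. \<exists>h. bij_betw h {e\<in>E2 y. src2 y e = r} (Sigma (NN r) (\<lambda>n. {..<chi (LL r n) (Var y :: ('f, 'v) fterm)}))"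
  proof (intro ballI)
    fix y r assume y: "y \<in> ?D'" and r: "r \<in> N2"
    have "card (Sigma (NN r) (\<lambda>n. {..<chi (LL r n) (Var y :: ('f, 'v) fterm)})) = (\<Sum>n\<in>NN r. chi (LL r n) (Var y :: ('f, 'v) fterm))"
      using fNN[OF r] by (simp add: card_SigmaI)
    also have "\<dots> = chi (l2 r) (Var y :: ('f, 'v) fterm)" unfolding Wl[OF r] by (rule chi_sum[OF fNN[OF r], symmetric])
    also have "\<dots> = card {e\<in>E2 y. src2 y e = r}" using degs[OF y r] by simp
    finally show "\<exists>h. bij_betw h {e\<in>E2 y. src2 y e = r} (Sigma (NN r) (\<lambda>n. {..<chi (LL r n) (Var y :: ('f, 'v) fterm)}))"
      by (intro finite_same_card_bij) (use fE[OF y] fNN[OF r] in auto)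
  qed
  then obtain Fs where Fs: "\<And>y r. y \<in> ?D' \<Longrightarrow> r \<in> N2 \<Longrightarrow> bij_betw (Fs y r) {e\<in>E2 y. src2 y e = r} (Sigma (NN r) (\<lambda>n. {..<chi (LL r n) (Var y :: ('f, 'v) fterm)}))"
    unfolding bchoice_iff by blast
  have "\<forall>y\<in>?D'. \<forall>r\<in>N2. \<exists>h. bij_betw h {e\<in>E2 y. tgt2 y e = r} (Sigma (NN r) (\<lambda>n. {..<chi (LL r n) (\<sigma> y)}))"
  proof (intro ballI)
    fix y r assume y: "y \<in> ?D'" and r: "r \<in> N2"
    have "card (Sigma (NN r) (\<lambda>n. {..<chi (LL r n) (\<sigma> y)})) = (\<Sum>n\<in>NN r. chi (LL r n) (\<sigma> y))"
      using fNN[OF r] by (simp add: card_SigmaI)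
    also have "\<dots> = chi (l2 r) (\<sigma> y)" unfolding Wl[OF r] by (rule chi_sum[OF fNN[OF r], symmetric])
    also have "\<dots> = card {e\<in>E2 y. tgt2 y e = r}" using degt[OF y r] by simp
    finally show "\<exists>h. bij_betw h {e\<in>E2 y. tgt2 y e = r} (Sigma (NN r) (\<lambda>n. {..<chi (LL r n) (\<sigma> y)}))"
      by (intro finite_same_card_bij) (use fE[OF y] fNN[OF r] in auto)
  qed
  then obtain Ft where Ft: "\<And>y r. y \<in> ?D' \<Longrightarrow> r \<in> N2 \<Longrightarrow> bij_betw (Ft y r) {e\<in>E2 y. tgt2 y e = r} (Sigma (NN r) (\<lambda>n. {..<chi (LL r n) (\<sigma> y)}))"
    unfolding bchoice_iff by blast
  have Fs_in: "fst (Fs y (src2 y e) e) \<in> NN (src2 y e)" if "y \<in> ?D'" "e \<in> E2 y" for y e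
  proof -
    have r: "src2 y e \<in> N2" using eN that by blast
    have "Fs y (src2 y e) e \<in> Sigma (NN (src2 y e)) (\<lambda>n. {..<chi (LL (src2 y e) n) (Var y :: ('f, 'v) fterm)})"
      using Fs[OF that(1) r] that(2) by (auto simp: bij_betw_def)
    then show ?thesis by auto
  qed
  have Ft_in: "fst (Ft y (tgt2 y e) e) \<in> NN (tgt2 y e)" if "y \<in> ?D'" "e \<in> E2 y" for y e
  proof -
    have r: "tgt2 y e \<in> N2" using eN that by blast
    have "Ft y (tgt2 y e) e \<in> Sigma (NN (tgt2 y e)) (\<lambda>n. {..<chi (LL (tgt2 y e) n) (\<sigma> y)})"
      using Ft[OF that(1) r] that(2) by (auto simp: bij_betw_def)
    then show ?thesis by auto
  qed
  define N' where "N' = prod_encode ` Sigma N2 NN"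
  define l' where "l' k = LL (fst (prod_decode k)) (snd (prod_decode k))" for k
  define ex where "ex r e = 2 * prod_encode (r, e) + 1" for r e
  define E' where "E' y = (if y = x then (\<Union>r\<in>N2. ex r ` EE r x) else (\<lambda>e. 2 * e) ` E2 y)" for y
  define src' where "src' y k = (if y = x then prod_encode (fst (prod_decode (k div 2)), SR (fst (prod_decode (k div 2))) x (snd (prod_decode (k div 2))))
      else prod_encode (src2 y (k div 2), fst (Fs y (src2 y (k div 2)) (k div 2))))" for y k
  define tgt' where "tgt' y k = (if y = x then prod_encode (fst (prod_decode (k div 2)), TR (fst (prod_decode (k div 2))) x (snd (prod_decode (k div 2))))
      else prod_encode (tgt2 y (k div 2), fst (Ft y (tgt2 y (k div 2)) (k div 2))))" for y k
  have src'x: "src' x (ex r e) = prod_encode (r, SR r x e)" for r e by (simp add: src'_def ex_def)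
  have tgt'x: "tgt' x (ex r e) = prod_encode (r, TR r x e)" for r e by (simp add: tgt'_def ex_def)
  have src'y: "y \<noteq> x \<Longrightarrow> src' y (2 * e) = prod_encode (src2 y e, fst (Fs y (src2 y e) e))" for y e by (simp add: src'_def)
  have tgt'y: "y \<noteq> x \<Longrightarrow> tgt' y (2 * e) = prod_encode (tgt2 y e, fst (Ft y (tgt2 y e) e))" for y e by (simp add: tgt'_def)
  have ex_inj: "ex r e = ex r' e' \<longleftrightarrow> r = r' \<and> e = e'" for r e r' e' by (simp add: ex_def)
  have l'_enc: "l' (prod_encode (r,n)) = LL r n" for r n by (simp add: l'_def)
  have sg: "sharing_graph S \<sigma> N' E' src' tgt' l'"
    unfolding sg_alt
  proof (intro conjI ballI)
    show "finite N'" using fN fNN by (simp add: N'_def)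
    show "N' \<noteq> {}" using neN neNN by (auto simp: N'_def)
    show "l' k \<in> S" if "k \<in> N'" for k using that LLS by (auto simp: N'_def l'_enc)
  next
    fix y assume y: "y \<in> subst_dom \<sigma>"
    show "finite (E' y)" using fN fEE fE y by (auto simp: E'_def)
    show "src' y k \<in> N'" if "k \<in> E' y" for k
    proof (cases "y = x")
      case True then show ?thesis using that eNN by (auto simp: E'_def src'x N'_def)
    next
      case False then show ?thesis using that y eN Fs_in by (auto simp: E'_def src'y N'_def)
    qed
    show "tgt' y k \<in> N'" if "k \<in> E' y" for k
    proof (cases "y = x")
      case True then show ?thesis using that eNN by (auto simp: E'_def tgt'x N'_def)
    next
      case False then show ?thesis using that y eN Ft_in by (auto simp: E'_def tgt'y N'_def)
    qed
    fix k assume k: "k \<in> N'"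
    then obtain r n where r: "r \<in> N2" and n: "n \<in> NN r" and kk: "k = prod_encode (r, n)" by (auto simp: N'_def)
    show "card {e\<in>E' y. src' y e = k} = chi (l' k) (Var y :: ('f, 'v) fterm)"
    proof (cases "y = x")
      case True
      have "{e\<in>E' y. src' y e = k} = ex r ` {e\<in>EE r x. SR r x e = n}"
        using True r by (auto simp: E'_def src'x kk)
      moreover have "inj_on (ex r) {e\<in>EE r x. SR r x e = n}" by (auto simp: inj_on_def ex_inj)
      ultimately show ?thesis using degsW[OF r] n True by (simp add: card_image kk l'_enc)
    next
      case False
      then have y': "y \<in> ?D'" using y by simp
      have "{e\<in>E' y. src' y e = k} = (\<lambda>e. 2 * e) ` {e\<in>{e\<in>E2 y. src2 y e = r}. fst (Fs y r e) = n}"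
        using False by (auto simp: E'_def src'y kk)
      moreover have "inj_on (\<lambda>e::nat. 2 * e) A" for A by (auto simp: inj_on_def)
      ultimately have "card {e\<in>E' y. src' y e = k} = card {e\<in>{e\<in>E2 y. src2 y e = r}. fst (Fs y r e) = n}"
        by (simp add: card_image)
      also have "\<dots> = card {p \<in> Sigma (NN r) (\<lambda>n. {..<chi (LL r n) (Var y :: ('f, 'v) fterm)}). fst p = n}"
        by (rule bij_count[OF Fs[OF y' r]])
      also have "\<dots> = chi (l' k) (Var y :: ('f, 'v) fterm)" using sigma_fst_card[OF n] by (simp add: kk l'_enc)
      finally show ?thesis .
    qed
    show "card {e\<in>E' y. tgt' y e = k} = chi (l' k) (\<sigma> y)"
    proof (cases "y = x")
      case True
      have "{e\<in>E' y. tgt' y e = k} = ex r ` {e\<in>EE r x. TR r x e = n}"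
        using True r by (auto simp: E'_def tgt'x kk)
      moreover have "inj_on (ex r) {e\<in>EE r x. TR r x e = n}" by (auto simp: inj_on_def ex_inj)
      ultimately show ?thesis using degtW[OF r] n True by (simp add: card_image kk l'_enc)
    next
      case False
      then have y': "y \<in> ?D'" using y by simp
      have "{e\<in>E' y. tgt' y e = k} = (\<lambda>e. 2 * e) ` {e\<in>{e\<in>E2 y. tgt2 y e = r}. fst (Ft y r e) = n}"
        using False by (auto simp: E'_def tgt'y kk)
      moreover have "inj_on (\<lambda>e::nat. 2 * e) A" for A by (auto simp: inj_on_def)
      ultimately have "card {e\<in>E' y. tgt' y e = k} = card {e\<in>{e\<in>E2 y. tgt2 y e = r}. fst (Ft y r e) = n}"
        by (simp add: card_image)
      also have "\<dots> = card {p \<in> Sigma (NN r) (\<lambda>n. {..<chi (LL r n) (\<sigma> y)}). fst p = n}"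
        by (rule bij_count[OF Ft[OF y' r]])
      also have "\<dots> = chi (l' k) (\<sigma> y)" using sigma_fst_card[OF n] by (simp add: kk l'_enc)
      finally show ?thesis .
    qed
  next
    fix y z assume y: "y \<in> subst_dom \<sigma>" and z: "z \<in> subst_dom \<sigma>"
    show "y \<noteq> z \<longrightarrow> E' y \<inter> E' z = {}"
    proof
      assume yz: "y \<noteq> z"
      show "E' y \<inter> E' z = {}"
      proof (cases "y = x \<or> z = x")
        case True then show ?thesis using yz by (auto simp: E'_def ex_def) presburger+
      next
        case False then show ?thesis using disj[of y z] y z yz by (auto simp: E'_def)
      qed
    qed
  next
    let ?R = "grel \<sigma> E' src' tgt'"
    have within: "(prod_encode (r,n), prod_encode (r,m)) \<in> ?R\<^sup>*" if r: "r \<in> N2" and n: "n \<in> NN r" and m: "m \<in> NN r" for r n m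
    proof (rule rtrancl_map_gen[OF connW[OF r, rule_format, OF n m], of "\<lambda>a. prod_encode (r, a)"])
      fix a b assume "(a,b) \<in> grel ?\<sigma>x (EE r) (SR r) (TR r)"
      then obtain e where e: "e \<in> EE r x" and ab: "(a,b) = (SR r x e, TR r x e) \<or> (a,b) = (TR r x e, SR r x e)"
        unfolding grel_def domx by blast
      have "ex r e \<in> E' x" using e r by (auto simp: E'_def)
      then have "(src' x (ex r e), tgt' x (ex r e)) \<in> ?R" "(tgt' x (ex r e), src' x (ex r e)) \<in> ?R"
        using xd unfolding grel_def by blast+
      then have "(prod_encode (r,a), prod_encode (r,b)) \<in> ?R"
        using ab unfolding src'x tgt'x by auto
      then show "(prod_encode (r,a), prod_encode (r,b)) \<in> ?R\<^sup>*" by blast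
    qed
    have between: "\<forall>n\<in>NN r. \<forall>m\<in>NN r'. (prod_encode (r,n), prod_encode (r',m)) \<in> ?R\<^sup>*"
      if "(r, r') \<in> (grel ?\<sigma>' E2 src2 tgt2)\<^sup>*" "r \<in> N2" for r r'
      using that
    proof (induction rule: rtrancl_induct)
      case base then show ?case using within by blast
    next
      case (step r1 r2)
      from step.hyps(2) obtain y e where y: "y \<in> ?D'" and e: "e \<in> E2 y"
        and rr: "(r1,r2) = (src2 y e, tgt2 y e) \<or> (r1,r2) = (tgt2 y e, src2 y e)"
        unfolding grel_def dom' by blast
      have yx: "y \<noteq> x" "y \<in> subst_dom \<sigma>" using y by auto
      have ed: "2 * e \<in> E' y" using e yx by (auto simp: E'_def)
      have edge: "(prod_encode (src2 y e, fst (Fs y (src2 y e) e)), prod_encode (tgt2 y e, fst (Ft y (tgt2 y e) e))) \<in> ?R"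
             "(prod_encode (tgt2 y e, fst (Ft y (tgt2 y e) e)), prod_encode (src2 y e, fst (Fs y (src2 y e) e))) \<in> ?R"
      proof -
        have "(src' y (2*e), tgt' y (2*e)) \<in> ?R" "(tgt' y (2*e), src' y (2*e)) \<in> ?R"
          using ed yx unfolding grel_def by blast+
        then show "(prod_encode (src2 y e, fst (Fs y (src2 y e) e)), prod_encode (tgt2 y e, fst (Ft y (tgt2 y e) e))) \<in> ?R"
             "(prod_encode (tgt2 y e, fst (Ft y (tgt2 y e) e)), prod_encode (src2 y e, fst (Fs y (src2 y e) e))) \<in> ?R"
          unfolding src'y[OF yx(1)] tgt'y[OF yx(1)] by auto
      qed
      have inS: "src2 y e \<in> N2" "tgt2 y e \<in> N2" using eN y e by auto
      obtain a b where r1: "r1 \<in> N2" and r2: "r2 \<in> N2" and a: "a \<in> NN r1" and b: "b \<in> NN r2"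
        and ab: "(prod_encode (r1, a), prod_encode (r2, b)) \<in> ?R"
        using rr edge inS Fs_in[OF y e] Ft_in[OF y e] by auto
      show ?case
      proof (intro ballI)
        fix n m assume n: "n \<in> NN r" and m: "m \<in> NN r2"
        have "(prod_encode (r,n), prod_encode (r1,a)) \<in> ?R\<^sup>*" using step.IH step.prems n a by blast
        also have "(prod_encode (r1,a), prod_encode (r2,b)) \<in> ?R\<^sup>*" using ab by blast
        also have "(prod_encode (r2,b), prod_encode (r2,m)) \<in> ?R\<^sup>*" using within[OF r2 b m] .
        finally show "(prod_encode (r,n), prod_encode (r2,m)) \<in> ?R\<^sup>*" .
      qed
    qed
    fix k k' assume "k \<in> N'" "k' \<in> N'"
    then obtain r n r' m where "r \<in> N2" "n \<in> NN r" "r' \<in> N2" "m \<in> NN r'"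
      and "k = prod_encode (r,n)" "k' = prod_encode (r',m)" by (auto simp: N'_def)
    then show "(k, k') \<in> ?R\<^sup>*" using between conn by blast
  qed
  have "sum l' N' = sum l2 N2"
  proof -
    have "sum l' N' = (\<Sum>p\<in>Sigma N2 NN. l' (prod_encode p))"
      unfolding N'_def by (simp add: sum.reindex[OF inj_prod_encode] comp_def)
    also have "\<dots> = (\<Sum>(r,n)\<in>Sigma N2 NN. LL r n)" by (rule sum.cong) (auto simp: l'_enc)
    also have "\<dots> = (\<Sum>r\<in>N2. sum (LL r) (NN r))" by (rule sum.Sigma[symmetric]) (use fN fNN in auto)
    also have "\<dots> = sum l2 N2" by (rule sum.cong) (auto simp: Wl)
    finally show ?thesis .
  qed
  then show ?thesis using mgu_pI[OF sg] by simp
qed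



lemma mgu_p_empty: "subst_dom \<sigma> = {} \<Longrightarrow> mgu_p S \<sigma> = S"
proof -
  assume d: "subst_dom \<sigma> = {}"
  have "sharing_graph S \<sigma> N E src tgt l \<longleftrightarrow> (\<exists>n. N = {n} \<and> l n \<in> S)" for N E src tgt l
  proof
    assume g: "sharing_graph S \<sigma> N E src tgt l"
    then obtain n where "n \<in> N" unfolding sharing_graph_def by blast
    moreover have "\<forall>m\<in>N. m = n" using g \<open>n\<in>N\<close> d unfolding sharing_graph_def by auto
    ultimately show "\<exists>n. N = {n} \<and> l n \<in> S" using g unfolding sharing_graph_def by blast
  next
    assume "\<exists>n. N = {n} \<and> l n \<in> S" then show "sharing_graph S \<sigma> N E src tgt l"
      using d unfolding sharing_graph_def by auto
  qed
  then show ?thesis unfolding mgu_p_def by force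
qed

lemma key:
  fixes \<sigma> :: "'v \<Rightarrow> ('f, 'v) fterm"
  assumes xd: "x \<in> subst_dom \<sigma>"
  shows "mgu_p (mgu_p S (single_subst x (\<sigma> x))) (\<sigma>(x := Var x)) = mgu_p S \<sigma>"
proof
  show "mgu_p (mgu_p S (single_subst x (\<sigma> x))) (\<sigma>(x := Var x)) \<subseteq> mgu_p S \<sigma>"
    using explode[OF _ xd] by (auto simp: mgu_p_def[of "mgu_p S (single_subst x (\<sigma> x))"])
  show "mgu_p S \<sigma> \<subseteq> mgu_p (mgu_p S (single_subst x (\<sigma> x))) (\<sigma>(x := Var x))"
    using contract[OF _ xd] by (auto simp: mgu_p_def[of S \<sigma>])
qed

lemma main_gen:
  "distinct (map fst bs) \<Longrightarrow> set bs = {(x, \<sigma> x) | x. x \<in> subst_dom \<sigma>} \<Longrightarrow> mgu_omega S bs = mgu_p S \<sigma>"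
proof (induction bs arbitrary: S \<sigma>)
  case Nil
  then have "subst_dom \<sigma> = {}" by auto
  then show ?case by (simp add: mgu_p_empty)
next
  case (Cons b bs)
  obtain x t where b: "b = (x, t)" by (cases b)
  have xin: "(x,t) \<in> {(x, \<sigma> x) | x. x \<in> subst_dom \<sigma>}" using Cons.prems b by auto
  then have t: "t = \<sigma> x" and xd: "x \<in> subst_dom \<sigma>" by auto
  have xnot: "x \<notin> fst ` set bs" using Cons.prems(1) b by auto
  have "set bs = {(y, (\<sigma>(x := Var x)) y) | y. y \<in> subst_dom (\<sigma>(x := Var x))}"
  proof -
    have "set bs = set (b#bs) - {(x,t)}" using xnot b by force
    then show ?thesis using Cons.prems(2) t by (auto simp: dom_upd)
  qed
  then have "mgu_omega (mgu_p S (single_subst x t)) bs = mgu_p (mgu_p S (single_subst x t)) (\<sigma>(x := Var x))"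
    using Cons.IH Cons.prems(1) by simp
  then show ?case using b t key[OF xd] by simp
qed

theorem theorem1:
  fixes S :: "'v::countable multiset set"
    and \<sigma> :: "'v \<Rightarrow> ('f, 'v) fterm"
    and bs :: "('v \<times> ('f, 'v) fterm) list"
  assumes "infinite (UNIV :: 'v set)"
    and "idempotent_subst \<sigma>"
    and "distinct (map fst bs)"
    and "set bs = {(x, \<sigma> x) | x. x \<in> subst_dom \<sigma>}"
  shows "mgu_omega S bs = mgu_p S \<sigma>"
  using main_gen assms(3,4) by blast

end
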